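(* Let $X\in\mathbb R^{n\times p}$ have unit $\ell_2$-norm columns and coherence $\mu$. Let $T_0\subset\{1,\dots,p\}$ with $|T_0|=s_0$, let $\lambda_1\ge\dots\ge\lambda_{s_0}$ be the $s_0$ largest eigenvalues of $X_{T_0}X_{T_0}^t$, and let $j\notin T_0$. Let $\tilde\lambda_1\ge\lambda_1$ with $\tilde\lambda_1>1$. Then $$ \lambda_1\big(X_{T_0}X_{T_0}^t+X_jX_j^t\big)\le\tilde\lambda_1+\epsilon_{s_0,\max},\qquad \epsilon_{s_0,\max}=\frac12\cdot\frac{s_0^3\mu^2\|X_{T_0}\|^2+4s_0^{3/2}\mu\|X_{T_0}\|\tilde\lambda_1}{2(\lambda_1-1)}. $$
   Context: $\mu=\max_{k<l}|\langle X_k,X_l\rangle|$ is the coherence of $X$, $X_j$ denotes the $j$-th column, $X_{T_0}$ the submatrix with columns indexed by $T_0$, $\|\cdot\|$ the operator norm, and $\lambda_k(A)$ the $k$-th largest eigenvalue of a symmetric matrix $A$. *)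

theory Defs
  imports "HOL-Analysis.Analysis"
begin

text \<open>Eigenvalues of a real square matrix, and the largest one
  (for symmetric matrices the set of eigenvalues is finite, nonempty and real).\<close>
definition eigenvalues :: "real^'n^'n \<Rightarrow> real set" where
  "eigenvalues A = {l. \<exists>v. v \<noteq> 0 \<and> A *v v = l *\<^sub>R v}"

definition lambda_max :: "real^'n^'n \<Rightarrow> real" where
  "lambda_max A = Max (eigenvalues A)"

definition coherence :: "real^'p^'n \<Rightarrow> real" where
  "coherence X = Max (insert 0 {\<bar>column k X \<bullet> column l X\<bar> | k l. k \<noteq> l})"

text \<open>The submatrix X_T, represented as the n x p matrix whose columns outside T
  are zero (same products X_T X_T^t and same operator norm as the true submatrix).\<close>
definition colsel :: "real^'p^'n \<Rightarrow> 'p set \<Rightarrow> real^'p^'n" where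
  "colsel X T = (\<chi> i j. if j \<in> T then X $ i $ j else 0)"

definition outer :: "real^'n \<Rightarrow> real^'n^'n" where
  "outer x = (\<chi> i k. x $ i * x $ k)"

end

theory Submission
  imports Defs
begin

lemma inner_transpose: "(transpose P *v x) \<bullet> y = x \<bullet> ((P::real^'a^'b) *v y)"
  by (simp add: dot_lmul_matrix)

lemma quad_zero:
  fixes aa bb :: real
  assumes "\<And>ss. 0 \<le> 2 * ss * aa + ss^2 * bb" "bb \<ge> 0"
  shows "aa = 0"
proof (rule ccontr)
  assume "aa \<noteq> 0"
  define ss where "ss = -aa/(bb+1)"
  have "bb + 1 \<noteq> 0" using assms(2) by simp
  hence aa: "aa = - ss * (bb+1)" unfolding ss_def by (simp del: minus_divide_left)
  have "ss \<noteq> 0" using \<open>aa\<noteq>0\<close> aa by auto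
  have "0 \<le> 2 * ss * aa + ss^2 * bb" using assms(1) .
  also have "2 * ss * aa + ss^2 * bb = - (ss^2 * (bb+2))"
    unfolding aa by (simp add: algebra_simps power2_eq_square)
  also have "\<dots> < 0" using \<open>ss\<noteq>0\<close> assms(2) by simp
  finally show False by simp
qed

lemma sym_max:
  fixes A :: "real^'n^'n"
  assumes sym: "transpose A = A"
  shows "finite (eigenvalues A) \<and> lambda_max A \<in> eigenvalues A \<and>
         (\<forall>v. v \<bullet> (A *v v) \<le> lambda_max A * (norm v)^2)"
proof -
  have symi: "u \<bullet> (A *v w) = w \<bullet> (A *v u)" for u w
    using inner_transpose[of A w u] sym by (simp add: inner_commute)
  have cont: "continuous_on (sphere 0 1) (\<lambda>v::real^'n. v \<bullet> (A *v v))"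
    by (intro continuous_intros linear_continuous_on) (auto intro: matrix_vector_mul_bounded_linear)
  have ne: "sphere (0::real^'n) 1 \<noteq> {}"
    using norm_axis_1[of undefined] by (metis mem_sphere_0 empty_iff)
  obtain u where usph: "u \<in> sphere 0 1" and umax: "\<And>w. w \<in> sphere 0 1 \<Longrightarrow> w \<bullet> (A *v w) \<le> u \<bullet> (A *v u)"
    using continuous_attains_sup[OF compact_sphere ne cont] by blast
  define m where "m = u \<bullet> (A *v u)"
  have nu: "norm u = 1" using usph by simp
  have ray: "v \<bullet> (A *v v) \<le> m * (norm v)^2" for v
  proof (cases "v = 0")
    case True then show ?thesis by simp
  next
    case False
    define w where "w = v /\<^sub>R norm v"
    have "w \<in> sphere 0 1" using False by (simp add: w_def)
    hence "w \<bullet> (A *v w) \<le> m" using umax m_def by blast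
    moreover have "v = norm v *\<^sub>R w" using False by (simp add: w_def)
    hence "v \<bullet> (A *v v) = (norm v)^2 * (w \<bullet> (A *v w))"
      by (metis (no_types, lifting) inner_scaleR_left inner_scaleR_right matrix_vector_mult_scaleR mult.assoc power2_eq_square)
    ultimately show ?thesis
      by (metis mult.commute mult_left_mono zero_le_power2)
  qed
  define r where "r = m *\<^sub>R u - A *v u"
  have psd: "0 \<le> w \<bullet> (m *\<^sub>R w - A *v w)" for w
    using ray[of w] by (simp add: inner_diff_right power2_norm_eq_inner)
  have key: "0 \<le> 2 * s * (r \<bullet> r) + s^2*(r \<bullet> (m *\<^sub>R r - A *v r))" for s
  proof -
    have "0 \<le> (u + s *\<^sub>R r) \<bullet> (m *\<^sub>R (u + s *\<^sub>R r) - A *v (u + s *\<^sub>R r))" by (rule psd)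
    also have "\<dots> = u \<bullet> (m *\<^sub>R u - A *v u) + s * (u \<bullet> (m *\<^sub>R r - A *v r)) + s * (r \<bullet> (m *\<^sub>R u - A *v u))
        + s^2 * (r \<bullet> (m *\<^sub>R r - A *v r))"
      by (simp add: algebra_simps inner_add_left inner_add_right inner_diff_right power2_eq_square)
    also have "u \<bullet> (m *\<^sub>R u - A *v u) = 0"
      using nu by (simp add: inner_diff_right m_def power2_norm_eq_inner[symmetric])
    also have "u \<bullet> (m *\<^sub>R r - A *v r) = r \<bullet> r"
    proof -
      have "u \<bullet> (m *\<^sub>R r - A *v r) = r \<bullet> (m *\<^sub>R u - A *v u)"
        using symi[of u r] by (simp add: inner_diff_right inner_commute)
      then show ?thesis by (simp add: r_def)
    qed
    also have "r \<bullet> (m *\<^sub>R u - A *v u) = r \<bullet> r" by (simp add: r_def)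
    finally show ?thesis by (simp add: algebra_simps)
  qed
  have "r \<bullet> r = 0" by (rule quad_zero[OF key psd])
  hence "A *v u = m *\<^sub>R u" by (simp add: r_def)
  moreover have "u \<noteq> 0" using nu by auto
  ultimately have mE: "m \<in> eigenvalues A" unfolding eigenvalues_def by auto
  have eig_iff: "l \<in> eigenvalues A \<longleftrightarrow> (\<exists>v. v \<noteq> 0 \<and> A *v v = l *\<^sub>R v)" for l
    by (simp add: eigenvalues_def)
  have le: "l \<le> m" if "l \<in> eigenvalues A" for l
  proof -
    have "\<exists>v. v \<noteq> 0 \<and> A *v v = l *\<^sub>R v" using that eig_iff by simp
    then obtain v where v: "v \<noteq> 0" "A *v v = l *\<^sub>R v" by (elim exE conjE)
    have "v \<bullet> (A *v v) = l * (v \<bullet> v)" using v(2) by simp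
    also have "v \<bullet> v = (norm v)^2" by (rule power2_norm_eq_inner[symmetric])
    finally have "l * (norm v)^2 \<le> m * (norm v)^2" using ray[of v] by linarith
    moreover have "(norm v)^2 > 0" using v(1) by simp
    ultimately show ?thesis by (rule mult_right_le_imp_le)
  qed
  define f where "f l = (SOME v. v \<noteq> 0 \<and> A *v v = l *\<^sub>R v)" for l
  have fE: "f l \<noteq> 0 \<and> A *v f l = l *\<^sub>R f l" if "l \<in> eigenvalues A" for l
  proof -
    have ex: "\<exists>v. v \<noteq> 0 \<and> A *v v = l *\<^sub>R v" using that eig_iff by simp
    show ?thesis unfolding f_def by (rule someI_ex[OF ex])
  qed
  have orth: "f l1 \<bullet> f l2 = 0" if "l1 \<in> eigenvalues A" "l2 \<in> eigenvalues A" "l1 \<noteq> l2" for l1 l2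
  proof -
    have e1: "A *v f l1 = l1 *\<^sub>R f l1" using fE[OF that(1)] by (rule conjunct2)
    have e2: "A *v f l2 = l2 *\<^sub>R f l2" using fE[OF that(2)] by (rule conjunct2)
    have "l1 * (f l1 \<bullet> f l2) = f l2 \<bullet> (A *v f l1)" unfolding e1 by (simp add: inner_commute)
    also have "\<dots> = f l1 \<bullet> (A *v f l2)" by (rule symi[symmetric])
    also have "\<dots> = l2 * (f l1 \<bullet> f l2)" unfolding e2 by simp
    finally have "(l1 - l2) * (f l1 \<bullet> f l2) = 0" by (simp add: algebra_simps)
    thus ?thesis using that(3) by simp
  qed
  have inj: "inj_on f (eigenvalues A)"
  proof (rule inj_onI)
    fix l1 l2 assume a: "l1 \<in> eigenvalues A" "l2 \<in> eigenvalues A" "f l1 = f l2"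
    have e1: "A *v f l1 = l1 *\<^sub>R f l1" using fE[OF a(1)] by (rule conjunct2)
    have e2: "A *v f l2 = l2 *\<^sub>R f l2" using fE[OF a(2)] by (rule conjunct2)
    have "l1 *\<^sub>R f l1 = l2 *\<^sub>R f l1" using e1 e2 a(3) by metis
    moreover have "f l1 \<noteq> 0" using fE[OF a(1)] by (rule conjunct1)
    ultimately show "l1 = l2" by (simp add: scaleR_cancel_right)
  qed
  have "pairwise orthogonal (f ` eigenvalues A)"
  proof (unfold pairwise_def orthogonal_def, intro ballI impI)
    fix p q assume pq: "p \<in> f ` eigenvalues A" "q \<in> f ` eigenvalues A" "p \<noteq> q"
    then obtain a b where ab: "a \<in> eigenvalues A" "b \<in> eigenvalues A" "p = f a" "q = f b" by blast
    have "a \<noteq> b" using pq(3) ab(3,4) by blast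
    thus "p \<bullet> q = 0" using orth[OF ab(1,2)] ab(3,4) by simp
  qed
  moreover have "0 \<notin> f ` eigenvalues A"
  proof
    assume "0 \<in> f ` eigenvalues A"
    then obtain l where "l \<in> eigenvalues A" "0 = f l" by blast
    thus False using fE by metis
  qed
  ultimately have "independent (f ` eigenvalues A)"
    by (rule pairwise_orthogonal_independent)
  hence "finite (f ` eigenvalues A)" by (rule conjunct1[OF independent_bound])
  hence fin: "finite (eigenvalues A)" using finite_imageD inj by blast
  have "lambda_max A = m" unfolding lambda_max_def by (rule Max_eqI[OF fin le mE])
  thus ?thesis using fin mE ray by simp
qed

lemma outer_mult: "outer x *v v = (x \<bullet> v) *\<^sub>R (x::real^'n)"
  by (simp add: vec_eq_iff outer_def matrix_vector_mult_def inner_vec_def sum_distrib_left mult.commute mult.left_commute)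

lemma transpose_add': "transpose (A + B) = transpose A + transpose (B::real^'n^'m)"
  by (simp add: transpose_def vec_eq_iff)

lemma transpose_outer: "transpose (outer x) = outer (x::real^'n)"
  by (simp add: transpose_def outer_def vec_eq_iff mult.commute)

lemma coh_fin: "finite (insert 0 {\<bar>column k X \<bullet> column l X\<bar> | k l. k \<noteq> l})"
  for X :: "real^'p^'n"
proof -
  have "{\<bar>column k X \<bullet> column l X\<bar> | k l. k \<noteq> l} \<subseteq> (\<lambda>(k,l). \<bar>column k X \<bullet> column l X\<bar>) ` UNIV"
    by auto
  thus ?thesis by (meson finite_imageI finite_insert finite_subset finite)
qed

lemma coh_ge: "k \<noteq> l \<Longrightarrow> \<bar>column k X \<bullet> column l X\<bar> \<le> coherence X"
  unfolding coherence_def by (rule Max_ge[OF coh_fin]) blast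

lemma coh_nonneg: "0 \<le> coherence X"
  unfolding coherence_def by (rule Max_ge[OF coh_fin]) blast

lemma coh_le1:
  assumes "\<And>k. norm (column k X) = 1"
  shows "coherence X \<le> 1"
  unfolding coherence_def
proof (rule Max.boundedI[OF coh_fin])
  show "insert 0 {\<bar>column k X \<bullet> column l X\<bar> | k l. k \<noteq> l} \<noteq> {}" by blast
  fix a assume "a \<in> insert 0 {\<bar>column k X \<bullet> column l X\<bar> | k l. k \<noteq> l}"
  then show "a \<le> 1"
  proof
    assume "a = 0" thus ?thesis by simp
  next
    assume "a \<in> {\<bar>column k X \<bullet> column l X\<bar> | k l. k \<noteq> l}"
    then obtain k l where "a = \<bar>column k X \<bullet> column l X\<bar>" by blast
    moreover have "\<bar>column k X \<bullet> column l X\<bar> \<le> norm (column k X) * norm (column l X)"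
      by (rule Cauchy_Schwarz_ineq2)
    ultimately show ?thesis using assms by simp
  qed
qed

lemma nonlin:
  fixes d e Y C t :: real
  assumes "d > 0" "Y \<ge> 0" "C \<ge> 0" "d * Y^2 \<le> t^2 * e" "t^2 * e \<le> \<bar>t\<bar> * C * Y" "t \<noteq> 0"
  shows "e * d \<le> C^2"
proof (cases "Y = 0")
  case True
  then have "t^2 * e \<le> 0" using assms(5) by simp
  then have "e \<le> 0" using assms(6) by (simp add: mult_le_0_iff)
  then show ?thesis using assms(1) by (smt (verit) mult_nonpos_nonneg zero_le_power2)
next
  case False
  hence Yp: "Y > 0" using assms(2) by simp
  have tp: "\<bar>t\<bar> > 0" using assms(6) by simp
  have t2: "t^2 = \<bar>t\<bar> * \<bar>t\<bar>" by (simp add: power2_eq_square abs_mult_self_eq)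
  have "d * Y * Y \<le> \<bar>t\<bar> * C * Y" using assms(4,5) by (simp add: power2_eq_square)
  hence h1: "d * Y \<le> \<bar>t\<bar> * C" using Yp by simp
  have "\<bar>t\<bar> * (\<bar>t\<bar> * e) \<le> \<bar>t\<bar> * (C * Y)" using assms(5) t2 by (simp add: mult.assoc)
  hence h2: "\<bar>t\<bar> * e \<le> C * Y" using tp by simp
  have "\<bar>t\<bar> * e * d \<le> C * Y * d" using h2 assms(1) by (simp add: mult_right_mono)
  also have "\<dots> = C * (d * Y)" by simp
  also have "\<dots> \<le> C * (\<bar>t\<bar> * C)" using h1 assms(3) by (simp add: mult_left_mono)
  finally have "\<bar>t\<bar> * (e * d) \<le> \<bar>t\<bar> * C^2" by (simp add: power2_eq_square algebra_simps)
  thus ?thesis using tp by simp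
qed

theorem mainTheorem3:
  fixes X :: "real^'p^'n" and T0 :: "'p set" and j :: 'p and lt :: real
  assumes unit_cols: "\<And>k. norm (column k X) = 1"
    and j_notin: "j \<notin> T0"
    and lt_ge: "lt \<ge> lambda_max (colsel X T0 ** transpose (colsel X T0))"
    and lt_gt1: "lt > 1"
    and defined: "lambda_max (colsel X T0 ** transpose (colsel X T0)) \<noteq> 1"
  shows "lambda_max (colsel X T0 ** transpose (colsel X T0) + outer (column j X))
      \<le> lt + (1/2) * ((real (card T0))^3 * (coherence X)^2 * (onorm (\<lambda>v. colsel X T0 *v v))^2
                 + 4 * (real (card T0)) powr (3/2) * coherence X * onorm (\<lambda>v. colsel X T0 *v v) * lt)
               / (2 * (lambda_max (colsel X T0 ** transpose (colsel X T0)) - 1))"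
proof -
  define P where "P = colsel X T0"
  define A where "A = P ** transpose P"
  define x where "x = column j X"
  define M where "M = A + outer x"
  define lam where "lam = lambda_max A"
  define nu where "nu = lambda_max M"
  define s where "s = real (card T0)"
  define mu where "mu = coherence X"
  define N where "N = onorm (\<lambda>v. P *v v)"
  have symA: "transpose A = A" by (simp add: A_def matrix_transpose_mul)
  have symM: "transpose M = M" by (simp add: M_def transpose_add' transpose_outer symA)
  note SA = sym_max[OF symA] and SM = sym_max[OF symM]
  have rayA: "w \<bullet> (A *v w) \<le> lam * (norm w)^2" for w using SA lam_def by blast
  have quadA: "w \<bullet> (A *v w) = (norm (transpose P *v w))^2" for w
  proof -
    have "A *v w = P *v (transpose P *v w)" by (simp only: A_def matrix_vector_mul_assoc)
    hence "w \<bullet> (A *v w) = (transpose P *v w) \<bullet> (transpose P *v w)"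
      using inner_transpose[of P w "transpose P *v w"] by simp
    thus ?thesis by (simp add: power2_norm_eq_inner)
  qed
  have xx: "x \<bullet> x = 1" using unit_cols[of j] unfolding x_def by (simp add: norm_eq_1)
  have lam0: "lam \<ge> 0"
  proof -
    have "lam \<in> eigenvalues A" using SA lam_def by blast
    then obtain u where u: "u \<noteq> 0" "A *v u = lam *\<^sub>R u" unfolding eigenvalues_def by blast
    have "lam * (u \<bullet> u) = u \<bullet> (A *v u)" using u(2) by simp
    also have "\<dots> \<ge> 0" using quadA by simp
    finally have "0 \<le> lam * (u \<bullet> u)" .
    moreover have "u \<bullet> u > 0" using u(1) by simp
    ultimately show ?thesis by (simp add: zero_le_mult_iff)
  qed
  have Pb: "(norm (P *v z))^2 \<le> lam * (norm z)^2" for z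
  proof (cases "P *v z = 0")
    case True thus ?thesis using lam0 by simp
  next
    case False
    define a where "a = norm (P *v z)"
    define b where "b = norm z"
    define d where "d = norm (transpose P *v (P *v z))"
    have ap: "a > 0" using False a_def by simp
    have "a^2 = z \<bullet> (transpose P *v (P *v z))"
      using inner_transpose[of "transpose P" z "P *v z"] by (simp add: a_def power2_norm_eq_inner)
    also have "\<dots> \<le> b * d" unfolding b_def d_def by (rule norm_cauchy_schwarz)
    finally have h1: "a^2 \<le> b * d" .
    have h2: "d^2 \<le> lam * a^2" using rayA[of "P *v z"] quadA[of "P *v z"] by (simp add: d_def a_def)
    have "a^2 * a^2 \<le> (b*d) * (b*d)" using h1 ap by (intro mult_mono) (auto intro: order_trans[OF zero_le_power2])
    also have "\<dots> = b^2 * d^2" by (simp add: power2_eq_square)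
    also have "\<dots> \<le> b^2 * (lam * a^2)" using h2 by (simp add: mult_left_mono)
    finally have "a^2 * a^2 \<le> (lam * b^2) * a^2" by (simp add: algebra_simps)
    hence "a^2 \<le> lam * b^2" by (rule mult_right_le_imp_le) (use ap in simp)
    thus ?thesis by (simp add: a_def b_def)
  qed
  have "nu \<in> eigenvalues M" using SM nu_def by blast
  then obtain v where v: "v \<noteq> 0" "M *v v = nu *\<^sub>R v" unfolding eigenvalues_def by blast
  define y where "y = transpose P *v v"
  define t where "t = x \<bullet> v"
  define c where "c = transpose P *v x"
  have E1: "P *v y + t *\<^sub>R x = nu *\<^sub>R v"
  proof -
    have "M *v v = A *v v + outer x *v v" by (simp add: M_def matrix_vector_mult_add_rdistrib)
    also have "A *v v = P *v y" by (simp only: A_def y_def matrix_vector_mul_assoc)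
    also have "outer x *v v = t *\<^sub>R x" by (simp add: outer_mult t_def)
    finally show ?thesis using v(2) by simp
  qed
  have E2: "transpose P *v (P *v y) + t *\<^sub>R c = nu *\<^sub>R y"
  proof -
    have "transpose P *v (P *v y + t *\<^sub>R x) = transpose P *v (nu *\<^sub>R v)" using E1 by simp
    thus ?thesis by (simp only: matrix_vector_right_distrib matrix_vector_mult_scaleR c_def y_def)
  qed
  have E3: "c \<bullet> y = (nu - 1) * t"
  proof -
    have "x \<bullet> (P *v y + t *\<^sub>R x) = x \<bullet> (nu *\<^sub>R v)" using E1 by simp
    hence "x \<bullet> (P *v y) + t * (x \<bullet> x) = nu * t" by (simp add: inner_add_right t_def)
    moreover have "x \<bullet> (P *v y) = c \<bullet> y" unfolding c_def by (rule inner_transpose[symmetric])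
    ultimately show ?thesis using xx by (simp add: algebra_simps)
  qed
  have E4: "nu * (norm y)^2 - (norm (P *v y))^2 = t * (c \<bullet> y)"
  proof -
    have "y \<bullet> (transpose P *v (P *v y) + t *\<^sub>R c) = y \<bullet> (nu *\<^sub>R y)" using E2 by simp
    hence "y \<bullet> (transpose P *v (P *v y)) + t * (c \<bullet> y) = nu * (y \<bullet> y)"
      by (simp add: inner_add_right inner_commute)
    moreover have "y \<bullet> (transpose P *v (P *v y)) = (P *v y) \<bullet> (P *v y)"
      using inner_transpose[of "transpose P" y "P *v y"] by simp
    ultimately show ?thesis by (simp add: power2_norm_eq_inner)
  qed
  have main: "(nu - 1) * (nu - lam) \<le> (norm c)^2" if gt: "nu > lam"
  proof -
    have F3: "(norm (P *v y))^2 \<le> lam * (norm y)^2" by (rule Pb)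
    have i1: "(nu - lam) * (norm y)^2 \<le> t^2 * (nu - 1)"
      using E4 E3 F3 by (simp add: algebra_simps power2_eq_square)
    have "t^2 * (nu - 1) = t * (c \<bullet> y)" using E3 by (simp add: power2_eq_square)
    also have "\<dots> \<le> \<bar>t\<bar> * \<bar>c \<bullet> y\<bar>" by (simp add: abs_mult[symmetric])
    also have "\<dots> \<le> \<bar>t\<bar> * (norm c * norm y)"
      by (intro mult_left_mono Cauchy_Schwarz_ineq2) simp
    finally have i2: "t^2 * (nu - 1) \<le> \<bar>t\<bar> * norm c * norm y" by (simp add: mult.assoc)
    have tn: "t \<noteq> 0"
    proof
      assume t0: "t = 0"
      hence "(nu - lam) * (norm y)^2 \<le> 0" using i1 by simp
      hence "norm y = 0" using gt by (simp add: mult_le_0_iff)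
      hence "y = 0" by simp
      hence "nu *\<^sub>R v = 0" using E1 t0 by simp
      hence "nu = 0" using v(1) by simp
      thus False using gt lam0 by simp
    qed
    have "(nu - 1) * (nu - lam) \<le> (norm c)^2"
      by (rule nonlin[OF _ _ _ i1 i2 tn]) (use gt in auto)
    thus ?thesis .
  qed
  have ctP: "transpose P *v w = (\<chi> k. if k \<in> T0 then column k X \<bullet> w else 0)" for w
    by (simp add: vec_eq_iff P_def colsel_def column_def inner_vec_def vector_matrix_mult_def mult.commute)
  have mu0: "mu \<ge> 0" unfolding mu_def by (rule coh_nonneg)
  have mu1: "mu \<le> 1" unfolding mu_def by (rule coh_le1[OF unit_cols])
  have cn: "(norm c)^2 \<le> s * mu^2"
  proof -
    have "(norm c)^2 = (\<Sum>k\<in>UNIV. c$k * c$k)" by (simp add: power2_norm_eq_inner inner_vec_def)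
    also have "\<dots> \<le> (\<Sum>k\<in>UNIV. if k \<in> T0 then mu^2 else 0)"
    proof (rule sum_mono)
      fix k :: 'p
      show "c$k * c$k \<le> (if k \<in> T0 then mu^2 else 0)"
      proof (cases "k \<in> T0")
        case True
        have "k \<noteq> j" using True j_notin by blast
        hence "\<bar>c$k\<bar> \<le> mu" using True coh_ge[of k j X] unfolding c_def ctP by (simp add: x_def mu_def)
        hence "\<bar>c$k\<bar>^2 \<le> mu^2" by (rule power_mono) simp
        thus ?thesis using True by (simp add: power2_eq_square)
      next
        case False thus ?thesis unfolding c_def ctP by simp
      qed
    qed
    also have "\<dots> = s * mu^2" by (simp add: sum.If_cases s_def)
    finally show ?thesis .
  qed
  have goal: "nu \<le> lt + (1/2) * (s^3 * mu^2 * N^2 + 4 * s powr (3/2) * mu * N * lt) / (2 * (lam - 1))"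
  proof (cases "T0 = {}")
    case True
    hence s0: "s = 0" by (simp add: s_def)
    have "nu \<le> lt"
    proof (cases "nu \<le> lam")
      case True thus ?thesis using lt_ge by (simp add: lam_def A_def P_def)
    next
      case False
      hence "(nu - 1) * (nu - lam) \<le> 0" using main cn s0 by fastforce
      hence "nu \<le> 1" using False by (simp add: mult_le_0_iff)
      thus ?thesis using lt_gt1 by simp
    qed
    thus ?thesis using s0 by simp
  next
    case False
    then obtain k where k: "k \<in> T0" by blast
    have s1: "s \<ge> 1" using k False by (simp add: s_def card_gt_0_iff Suc_le_eq)
    have lam1: "lam \<ge> 1"
    proof -
      define u where "u = column k X"
      have nu1: "norm u = 1" using unit_cols by (simp add: u_def)
      have "(transpose P *v u) $ k = 1" using k nu1 unfolding ctP by (simp add: u_def norm_eq_1)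
      hence "1 \<le> norm (transpose P *v u)" using component_le_norm_cart[of "transpose P *v u" k] by simp
      hence "1 \<le> (norm (transpose P *v u))^2" by (simp add: one_le_power)
      also have "\<dots> = u \<bullet> (A *v u)" by (rule quadA[symmetric])
      also have "\<dots> \<le> lam * (norm u)^2" by (rule rayA)
      finally show ?thesis using nu1 by simp
    qed
    have lamg: "lam > 1" using lam1 defined by (simp add: lam_def A_def P_def)
    have N1: "N \<ge> 1"
    proof -
      have "norm (column k P) \<le> onorm ((*v) P)" by (rule norm_column_le_onorm)
      moreover have "column k P = column k X" using k by (simp add: column_def P_def colsel_def)
      ultimately show ?thesis using unit_cols[of k] by (simp add: N_def)
    qed
    have s32: "s \<le> s powr (3/2)"
      using s1 powr_mono[of 1 "3/2" s] by simp
    have K: "s * mu^2 \<le> s powr (3/2) * mu * N * lt"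
    proof -
      have "s * mu^2 \<le> s * mu" using mu0 mu1 s1 by (simp add: power2_eq_square mult_left_le)
      also have "\<dots> \<le> s powr (3/2) * mu" using s32 mu0 by (simp add: mult_right_mono)
      also have "\<dots> \<le> s powr (3/2) * mu * N"
        using mult_left_mono[OF N1, of "s powr (3/2) * mu"] mu0 by simp
      also have "\<dots> \<le> s powr (3/2) * mu * N * lt"
        using mult_left_mono[of 1 lt "s powr (3/2) * mu * N"] lt_gt1 N1 mu0 by simp
      finally show ?thesis .
    qed
    define eps where "eps = (1/2) * (s^3 * mu^2 * N^2 + 4 * s powr (3/2) * mu * N * lt) / (2 * (lam - 1))"
    have "s * mu^2 \<le> (s^3 * mu^2 * N^2 + 4 * s powr (3/2) * mu * N * lt) / 4"
    proof -
      have "0 \<le> s^3 * mu^2 * N^2" using s1 by simp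
      thus ?thesis using K by simp
    qed
    hence h4: "4 * (s * mu^2) \<le> s^3 * mu^2 * N^2 + 4 * s powr (3/2) * mu * N * lt" by simp
    have eps1: "s * mu^2 / (lam - 1) \<le> eps"
    proof -
      have "s * mu^2 / (lam - 1) = (4 * (s * mu^2)) / (4 * (lam - 1))" by (rule mult_divide_mult_cancel_left[symmetric]) simp
      also have "\<dots> \<le> (s^3 * mu^2 * N^2 + 4 * s powr (3/2) * mu * N * lt) / (4 * (lam - 1))"
        by (rule divide_right_mono[OF h4]) (use lamg in simp)
      also have "\<dots> = eps" by (simp add: eps_def)
      finally show ?thesis .
    qed
    have eps0: "0 \<le> eps" using eps1 lamg s1 by (smt (verit) divide_nonneg_pos zero_le_power2 mult_nonneg_nonneg)
    have "nu \<le> lt + eps"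
    proof (cases "nu \<le> lam")
      case True thus ?thesis using lt_ge eps0 by (simp add: lam_def A_def P_def)
    next
      case False
      have "(nu - lam) * (lam - 1) \<le> (nu - lam) * (nu - 1)" by (rule mult_left_mono) (use False in auto)
      also have "\<dots> = (nu - 1) * (nu - lam)" by (rule mult.commute)
      also have "\<dots> \<le> s * mu^2" using main False cn by fastforce
      finally have "nu - lam \<le> s * mu^2 / (lam - 1)" using lamg by (simp add: pos_le_divide_eq)
      thus ?thesis using eps1 lt_ge by (simp add: lam_def A_def P_def)
    qed
    thus ?thesis by (simp add: eps_def)
  qed
  thus ?thesis by (simp only: nu_def M_def A_def P_def x_def lam_def s_def mu_def N_def)
qed

end
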